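(* Let $V$ be a commutative unital quantale whose underlying lattice is a frame. Let $(X,a,+)$ be a $V$-group, $Y$ a group, and $f\colon X\to Y$ a surjective group homomorphism. Define $b\colon Y\times Y\to V$ by $b(y_1,y_2)=\bigvee\{a(x_1,x_2)\mid x_1,x_2\in X,\ f(x_1)=y_1,\ f(x_2)=y_2\}$. Then $(Y,b,+)$ is a $V$-group and $f\colon(X,a,+)\to(Y,b,+)$ is a $V$-homomorphism.
   Context: A commutative unital quantale $V$ is a complete lattice with a commutative associative operation $\otimes$ with unit $k$ preserving arbitrary joins in each variable. A $V$-category $(X,a)$: $a\colon X\times X\to V$ with $k\le a(x,x)$ and $a(x,x')\otimes a(x',x'')\le a(x,x'')$. A $V$-group $(X,a,+)$ is a $V$-category with a group structure (additive, not necessarily abelian) such that $a(x_1,x_2)\otimes a(x_1',x_2')\le a(x_1+x_1',x_2+x_2')$. A $V$-homomorphism is a group homomorphism $f$ with $a(x,x')\le b(f(x),f(x'))$. *)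

theory Defs
  imports Main
begin

definition cu_quantale :: "('v::complete_lattice \<Rightarrow> 'v \<Rightarrow> 'v) \<Rightarrow> 'v \<Rightarrow> bool" where
  "cu_quantale t k \<longleftrightarrow>
     (\<forall>x y z. t (t x y) z = t x (t y z)) \<and>
     (\<forall>x y. t x y = t y x) \<and>
     (\<forall>x. t k x = x \<and> t x k = x) \<and>
     (\<forall>x A. t x (Sup A) = Sup ((\<lambda>y. t x y) ` A)) \<and>
     (\<forall>x A. t (Sup A) x = Sup ((\<lambda>y. t y x) ` A))"

definition is_frame :: "'v::complete_lattice itself \<Rightarrow> bool" where
  "is_frame _ \<longleftrightarrow> (\<forall>(x::'v) A. inf x (Sup A) = Sup ((\<lambda>y. inf x y) ` A))"

definition V_category :: "('v::complete_lattice \<Rightarrow> 'v \<Rightarrow> 'v) \<Rightarrow> 'v \<Rightarrow> ('x \<Rightarrow> 'x \<Rightarrow> 'v) \<Rightarrow> bool" where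
  "V_category t k a \<longleftrightarrow>
     (\<forall>x. k \<le> a x x) \<and> (\<forall>x x' x''. t (a x x') (a x' x'') \<le> a x x'')"

definition V_group :: "('v::complete_lattice \<Rightarrow> 'v \<Rightarrow> 'v) \<Rightarrow> 'v \<Rightarrow> ('x::group_add \<Rightarrow> 'x \<Rightarrow> 'v) \<Rightarrow> bool" where
  "V_group t k a \<longleftrightarrow> V_category t k a \<and>
     (\<forall>x1 x2 x1' x2'. t (a x1 x2) (a x1' x2') \<le> a (x1 + x1') (x2 + x2'))"

definition group_hom :: "('x::group_add \<Rightarrow> 'y::group_add) \<Rightarrow> bool" where
  "group_hom f \<longleftrightarrow> (\<forall>x y. f (x + y) = f x + f y)"

definition V_hom :: "('x::group_add \<Rightarrow> 'x \<Rightarrow> 'v::complete_lattice) \<Rightarrow> ('y::group_add \<Rightarrow> 'y \<Rightarrow> 'v) \<Rightarrow> ('x \<Rightarrow> 'y) \<Rightarrow> bool" where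
  "V_hom a b f \<longleftrightarrow> group_hom f \<and> (\<forall>x x'. a x x' \<le> b (f x) (f x'))"

end

theory Submission
  imports Defs
begin

lemma tsup_le:
  assumes q: "cu_quantale t k"
    and h: "\<And>u v. u \<in> A \<Longrightarrow> v \<in> B \<Longrightarrow> t u v \<le> c"
  shows "t (Sup A) (Sup B) \<le> c"
proof -
  have l: "\<And>x A. t x (Sup A) = Sup ((\<lambda>y. t x y) ` A)"
   and r: "\<And>x A. t (Sup A) x = Sup ((\<lambda>y. t y x) ` A)"
    using q unfolding cu_quantale_def by blast+
  have "t u (Sup B) \<le> c" if "u \<in> A" for u
    unfolding l using h that by (auto intro!: Sup_least)
  then show ?thesis unfolding r by (auto intro!: Sup_least)
qed

lemma tmono:
  assumes q: "cu_quantale t k" and "x \<le> y"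
  shows "t z x \<le> t z y"
proof -
  have l: "\<And>x A. t x (Sup A) = Sup ((\<lambda>y. t x y) ` A)"
    using q unfolding cu_quantale_def by blast
  have "Sup {x, y} = y" using assms(2) by (simp add: sup_absorb2)
  then have "t z y = sup (t z x) (t z y)" using l[of z "{x,y}"] by simp
  then show ?thesis by (metis sup.cobounded1)
qed

theorem proposition3p7:
  fixes t :: "'v::complete_lattice \<Rightarrow> 'v \<Rightarrow> 'v" and k :: 'v
    and a :: "'x::group_add \<Rightarrow> 'x \<Rightarrow> 'v" and f :: "'x \<Rightarrow> 'y::group_add"
    and b :: "'y \<Rightarrow> 'y \<Rightarrow> 'v"
  assumes "cu_quantale t k"
    and "is_frame TYPE('v)"
    and "V_group t k a"
    and "group_hom f"
    and "surj f"
    and "\<And>y1 y2. b y1 y2 = Sup {a x1 x2 | x1 x2. f x1 = y1 \<and> f x2 = y2}"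
  shows "V_group t k b \<and> V_hom a b f"
proof -
  note q = assms(1)
  have refl: "\<And>x. k \<le> a x x" and tr: "\<And>x x' x''. t (a x x') (a x' x'') \<le> a x x''"
    and comp: "\<And>x1 x2 x1' x2'. t (a x1 x2) (a x1' x2') \<le> a (x1 + x1') (x2 + x2')"
    using assms(3) unfolding V_group_def V_category_def by blast+
  have unit: "\<And>x. t x k = x" using q unfolding cu_quantale_def by blast
  have hom: "\<And>x y. f (x + y) = f x + f y" using assms(4) unfolding group_hom_def by blast
  have f0: "f 0 = 0"
  proof -
    have "f 0 + f 0 = f 0 + 0" using hom[of 0 0] by simp
    then show ?thesis by (rule add_left_imp_eq[symmetric, THEN sym])
  qed
  have fm: "f (- x) = - f x" for x
  proof -
    have "f x + f (- x) = 0" using hom[of x "-x"] f0 by simp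
    then show ?thesis using minus_unique[of "f x" "f (-x)"] by simp
  qed
  have ab: "a x x' \<le> b (f x) (f x')" for x x'
    unfolding assms(6) by (rule Sup_upper) blast
  have brefl: "k \<le> b y y" for y
  proof -
    obtain x where "y = f x" using assms(5) by blast
    then show ?thesis using ab[of x x] refl[of x] by auto
  qed
  have btr: "t (b y y') (b y' y'') \<le> b y y''" for y y' y''
  proof -
    have "t (Sup {a x1 x2 |x1 x2. f x1 = y \<and> f x2 = y'}) (Sup {a x1 x2 |x1 x2. f x1 = y' \<and> f x2 = y''}) \<le> b y y''"
    proof (rule tsup_le[OF q])
      fix u v assume "u \<in> {a x1 x2 |x1 x2. f x1 = y \<and> f x2 = y'}" "v \<in> {a x1 x2 |x1 x2. f x1 = y' \<and> f x2 = y''}"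
      then obtain x1 x2 x3 x4 where e: "u = a x1 x2" "v = a x3 x4" "y = f x1" "y' = f x2" "f x3 = f x2" "y'' = f x4"
        by auto
      define d where "d = - x3 + x2"
      have "a x3 x4 = t (a x3 x4) k" using unit by simp
      also have "\<dots> \<le> t (a x3 x4) (a d d)" by (rule tmono[OF q refl])
      also have "\<dots> \<le> a (x3 + d) (x4 + d)" by (rule comp)
      finally have 1: "a x3 x4 \<le> a x2 (x4 + d)" unfolding d_def by (simp add: add.assoc)
      have "t (a x1 x2) (a x3 x4) \<le> t (a x1 x2) (a x2 (x4 + d))" by (rule tmono[OF q 1])
      also have "\<dots> \<le> a x1 (x4 + d)" by (rule tr)
      also have "\<dots> \<le> b (f x1) (f (x4 + d))" by (rule ab)
      also have "f (x4 + d) = f x4" unfolding d_def using e hom fm by simp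
      finally show "t u v \<le> b y y''" using e by simp
    qed
    then show ?thesis using assms(6) by simp
  qed
  have bcomp: "t (b y1 y2) (b y1' y2') \<le> b (y1 + y1') (y2 + y2')" for y1 y2 y1' y2'
  proof -
    have "t (Sup {a x1 x2 |x1 x2. f x1 = y1 \<and> f x2 = y2}) (Sup {a x1 x2 |x1 x2. f x1 = y1' \<and> f x2 = y2'}) \<le> b (y1 + y1') (y2 + y2')"
    proof (rule tsup_le[OF q])
      fix u v assume "u \<in> {a x1 x2 |x1 x2. f x1 = y1 \<and> f x2 = y2}" "v \<in> {a x1 x2 |x1 x2. f x1 = y1' \<and> f x2 = y2'}"
      then obtain x1 x2 x3 x4 where e: "u = a x1 x2" "v = a x3 x4" "y1 = f x1" "y2 = f x2" "y1' = f x3" "y2' = f x4"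
        by auto
      have "t (a x1 x2) (a x3 x4) \<le> a (x1 + x3) (x2 + x4)" by (rule comp)
      also have "\<dots> \<le> b (f (x1 + x3)) (f (x2 + x4))" by (rule ab)
      finally show "t u v \<le> b (y1 + y1') (y2 + y2')" using e hom by simp
    qed
    then show ?thesis using assms(6) by simp
  qed
  show ?thesis unfolding V_group_def V_category_def V_hom_def
    using brefl btr bcomp ab assms(4) by blast
qed

end
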